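(* Let $n$ be a prime. For every nonnegative integer $s < n-1$, \[ \sum_{k=1}^{n-1-s} \frac{1}{k}\binom{k+s}{s} \equiv -\sum_{k=1}^{n-1-s} \frac{1}{k} \pmod{n}. \] In particular, if $n>2$, then $\sum_{k=1}^{n-1} \frac{1}{k} \equiv 0 \pmod{n}$.
   Context: For $1\le k\le n-1$, $\frac{1}{k}$ denotes the multiplicative inverse of $k$ modulo $n$ (equivalently, the congruences are congruences of rationals with denominators prime to $n$). *)

theory Defs
  imports "HOL-Number_Theory.Number_Theory"
begin

end

theory Submission imports Defs begin

lemma cop:
  fixes P k :: nat
  assumes "prime P" "1 \<le> k" "k < P"
  shows "coprime (int k) (int P)"
proof -
  have "coprime P k" using assms by (intro prime_imp_coprime) (auto dest: dvd_imp_le)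
  then show ?thesis by (simp add: coprime_commute)
qed

lemma inv_neg:
  fixes P k :: nat
  assumes "prime P" "1 \<le> k" "k < P"
  shows "[modular_inverse (int P) (int (P - k)) = - modular_inverse (int P) (int k)] (mod int P)"
proof -
  let ?i = "modular_inverse (int P) (int k)"
  have c: "[int k * ?i = 1] (mod int P)"
    using cop[OF assms] by (rule cong_modular_inverse1)
  have "[int (P - k) * (- ?i) = int k * ?i] (mod int P)"
  proof -
    have "int (P - k) * (- ?i) = int k * ?i + (- ?i) * int P" using assms by (simp add: algebra_simps of_nat_diff)
    then show ?thesis unfolding cong_def by (simp only: mod_mult_self1)
  qed
  with c have "[int (P - k) * ((- ?i) mod int P) = 1] (mod int P)"
    by (metis (no_types, lifting) cong_mod_right cong_refl cong_scalar_left cong_trans)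
  then have "modular_inverse (int P) (int (P - k)) = (- ?i) mod int P"
    using assms by (intro modular_inverse_int_eqI) (auto dest: prime_gt_0_nat)
  then show ?thesis by (simp add: cong_def)
qed

lemma choose_pm1:
  fixes P j :: nat
  assumes "prime P" "j < P"
  shows "[int ((P - 1) choose j) = (-1) ^ j] (mod int P)"
  using assms(2)
proof (induction j)
  case 0 then show ?case by simp
next
  case (Suc j)
  have P: "P = Suc (P - 1)" using assms prime_gt_0_nat by simp
  have "P choose Suc j = ((P - 1) choose j) + ((P - 1) choose Suc j)"
    by (subst P) simp
  moreover have "P dvd (P choose Suc j)" using Suc.prems assms by (intro dvd_choose_prime) auto
  ultimately have "[int ((P - 1) choose Suc j) = - int ((P - 1) choose j)] (mod int P)"
  proof -
    assume a: "P choose Suc j = ((P - 1) choose j) + ((P - 1) choose Suc j)" "P dvd (P choose Suc j)"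
    have "int P dvd int ((P - 1) choose Suc j) - - int ((P - 1) choose j)"
      using a by (metis diff_minus_eq_add int_dvd_int_iff of_nat_add add.commute)
    then show ?thesis by (simp add: cong_iff_dvd_diff)
  qed
  moreover have "[- int ((P - 1) choose j) = - ((-1) ^ j)] (mod int P)"
    using Suc by (simp add: cong_minus_minus_iff)
  ultimately show ?case by (auto elim: cong_trans)
qed

lemma hockey:
  "int (\<Sum>k=1..m. (k + s) choose s) = int ((m + s + 1) choose (s + 1)) - 1"
  by (induction m) (simp_all add: algebra_simps)

lemma term_step:
  fixes P k s :: nat
  assumes "prime P" "1 \<le> k" "k < P" "s + 1 < P"
  shows "[modular_inverse (int P) (int k) * int ((k + s + 1) choose (s + 1)) =
          modular_inverse (int P) (int k) * int ((k + s) choose s)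
          + modular_inverse (int P) (int (s + 1)) * int ((k + s) choose s)] (mod int P)"
proof -
  let ?i = "modular_inverse (int P) (int k)"
  let ?j = "modular_inverse (int P) (int (s + 1))"
  let ?C = "int ((k + s) choose s)"
  let ?D = "int ((k + s + 1) choose (s + 1))"
  have x: "[int k * ?i = 1] (mod int P)"
    using cop[OF assms(1-3)] by (rule cong_modular_inverse1)
  have y: "[int (s + 1) * ?j = 1] (mod int P)"
    using cop[OF assms(1), of "s+1"] assms by (intro cong_modular_inverse1) auto
  have nat_id: "(k + s + 1) * ((k + s) choose s) = ((k + s + 1) choose (s + 1)) * (s + 1)"
    using Suc_times_binomial_eq[of "k + s" s] by simp
  then have int_id: "int (k + s + 1) * ?C = ?D * int (s + 1)"
    by (metis of_nat_mult)
  have "int k * int (s + 1) * (?i * ?D) = int (s + 1) * ?D * (int k * ?i)" by (simp add: algebra_simps)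
  also have "[\<dots> = int (s + 1) * ?D * 1] (mod int P)" by (intro cong_mult cong_refl x)
  also have "int (s + 1) * ?D * 1 = int (s + 1) * ?C * 1 + int k * ?C * 1"
    using int_id by (simp add: algebra_simps)
  also have "[\<dots> = int (s + 1) * ?C * (int k * ?i) + int k * ?C * (int (s + 1) * ?j)] (mod int P)"
    by (rule cong_add[OF cong_scalar_left[OF cong_sym[OF x]] cong_scalar_left[OF cong_sym[OF y]]])
  also have "int (s + 1) * ?C * (int k * ?i) + int k * ?C * (int (s + 1) * ?j)
     = int k * int (s + 1) * (?i * ?C + ?j * ?C)" by (simp add: algebra_simps)
  finally have "[int k * int (s + 1) * (?i * ?D) = int k * int (s + 1) * (?i * ?C + ?j * ?C)] (mod int P)" .
  moreover have "coprime (int k * int (s + 1)) (int P)"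
    using cop[OF assms(1-3)] cop[OF assms(1), of "s+1"] assms by simp
  ultimately show ?thesis by (simp add: cong_mult_lcancel)
qed

definition HH :: "nat \<Rightarrow> nat \<Rightarrow> int" where
  "HH P m = (\<Sum>k=1..m. modular_inverse (int P) (int k))"
definition AA :: "nat \<Rightarrow> nat \<Rightarrow> int" where
  "AA P s = (\<Sum>k=1..P - 1 - s. modular_inverse (int P) (int k) * int ((k + s) choose s))"

lemma harm_neg:
  fixes P :: nat
  assumes "prime P"
  shows "[HH P (P - 1) = - HH P (P - 1)] (mod int P)"
proof -
  have "HH P (P - 1) = (\<Sum>k=1..P - 1. modular_inverse (int P) (int (P - k)))"
    unfolding HH_def
    by (rule sum.reindex_bij_witness[of _ "\<lambda>k. P - k" "\<lambda>k. P - k"]) auto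
  also have "[\<dots> = (\<Sum>k=1..P - 1. - modular_inverse (int P) (int k))] (mod int P)"
    by (rule cong_sum, rule inv_neg[OF assms]) auto
  also have "(\<Sum>k=1..P - 1. - modular_inverse (int P) (int k)) = - HH P (P - 1)"
    by (simp add: HH_def sum_negf)
  finally show ?thesis .
qed

lemma main_ind:
  fixes P s :: nat
  assumes "prime P" "s + 1 < P"
  shows "[AA P s = - HH P (P - 1 - s)] (mod int P)"
  using assms(2)
proof (induction s)
  case 0
  have "AA P 0 = HH P (P - 1)" by (simp add: AA_def HH_def)
  then show ?case using harm_neg[OF assms(1)] by simp
next
  case (Suc s)
  define m where "m = P - 2 - s"
  have m1: "P - 1 - s = Suc m" and m2: "P - 1 - Suc s = m" and m3: "m + 1 + s = P - 1"
    using Suc.prems by (auto simp: m_def)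
  let ?inv = "\<lambda>k::nat. modular_inverse (int P) (int k)"
  let ?i = "?inv (s + 1)"
  let ?j = "?inv (m + 1)"
  let ?c0 = "int ((P - 1) choose s)"
  let ?c1 = "int ((P - 1) choose (s + 1))"
  let ?e = "(-1::int) ^ s"
  let ?B = "\<Sum>k=1..m. ?inv k * int ((k + s) choose s)"
  have "HH P (P - 1 - s) = HH P m + ?j" unfolding HH_def m1 by simp
  then have IH: "[AA P s = - HH P m - ?j] (mod int P)"
    using Suc.IH Suc.prems by simp
  have ji: "[?j = - ?i] (mod int P)"
  proof -
    have "m + 1 = P - (s + 1)" using m3 Suc.prems by simp
    then show ?thesis using inv_neg[OF assms(1), of "s + 1"] Suc.prems by simp
  qed
  have F2: "AA P s = ?B + ?j * ?c0"
    unfolding AA_def m1 using m3 by (simp add: add.commute)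
  have "AA P (Suc s) = (\<Sum>k=1..m. ?inv k * int ((k + s + 1) choose (s + 1)))"
    unfolding AA_def m2 by simp
  also have "[\<dots> = (\<Sum>k=1..m. ?inv k * int ((k + s) choose s) + ?i * int ((k + s) choose s))] (mod int P)"
    by (rule cong_sum, rule term_step[OF assms(1)]) (use Suc.prems m_def in auto)
  also have "(\<Sum>k=1..m. ?inv k * int ((k + s) choose s) + ?i * int ((k + s) choose s))
      = ?B + ?i * int (\<Sum>k=1..m. (k + s) choose s)"
    by (simp add: sum.distrib sum_distrib_left)
  also have "\<dots> = (AA P s - ?j * ?c0) + ?i * (?c1 - 1)"
  proof -
    have "m + s + 1 = P - 1" using m3 by simp
    then have "int (\<Sum>k=1..m. (k + s) choose s) = ?c1 - 1"
      using hockey[where m=m and s=s] by simp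
    then show ?thesis using F2 by simp
  qed
  also have "[\<dots> = (- HH P m - ?j - (- ?i) * ?e) + ?i * (- ?e - 1)] (mod int P)"
  proof (intro cong_add cong_diff cong_mult cong_refl IH)
    show "[?j = - ?i] (mod int P)" by (rule ji)
    show "[?c0 = ?e] (mod int P)" using choose_pm1[OF assms(1), of s] Suc.prems by simp
    show "[?c1 = - ?e] (mod int P)" using choose_pm1[OF assms(1), of "s+1"] Suc.prems by simp
  qed
  also have "(- HH P m - ?j - (- ?i) * ?e) + ?i * (- ?e - 1) = - HH P m - ?j - ?i" 
    by (simp add: algebra_simps)
  also have "[- HH P m - ?j - ?i = - HH P m - (- ?i) - ?i] (mod int P)"
    by (intro cong_diff cong_refl ji)
  also have "- HH P m - (- ?i) - ?i = - HH P (P - 1 - Suc s)" by (simp add: m_def)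
  finally show ?case .
qed

lemma sum_int_ivl:
  "(\<Sum>k\<in>{1..int m}. f k) = (\<Sum>k=1..m. f (int k))"
  by (rule sum.reindex_bij_witness[of _ int nat]) auto

theorem theorem4p1:
  fixes n :: int
  assumes "prime n"
  shows "(\<forall>s::nat. int s < n - 1 \<longrightarrow>
           [(\<Sum>k\<in>{1..n - 1 - int s}. modular_inverse n k * ((nat k + s) choose s))
             = - (\<Sum>k\<in>{1..n - 1 - int s}. modular_inverse n k)] (mod n))
       \<and> (n > 2 \<longrightarrow> [(\<Sum>k\<in>{1..n - 1}. modular_inverse n k) = 0] (mod n))"
proof -
  define P where "P = nat n"
  have n0: "n > 1" using assms prime_gt_1_int by blast
  have nP: "n = int P" using n0 by (simp add: P_def)
  have pP: "prime P" using assms nP by simp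
  have part1: "[(\<Sum>k\<in>{1..n - 1 - int s}. modular_inverse n k * ((nat k + s) choose s))
             = - (\<Sum>k\<in>{1..n - 1 - int s}. modular_inverse n k)] (mod n)"
    if hs: "int s < n - 1" for s :: nat
  proof -
    have e: "n - 1 - int s = int (P - 1 - s)" using hs nP by simp
    have "s + 1 < P" using hs nP by simp
    from main_ind[OF pP this] show ?thesis
      unfolding e sum_int_ivl by (simp add: AA_def HH_def nP)
  qed
  have part2: "[(\<Sum>k\<in>{1..n - 1}. modular_inverse n k) = 0] (mod n)" if "n > 2"
  proof -
    have e: "n - 1 = int (P - 1)" using nP n0 by simp
    have h: "[HH P (P - 1) = - HH P (P - 1)] (mod int P)" by (rule harm_neg[OF pP])
    then have "int P dvd 2 * HH P (P - 1)"
      by (simp add: cong_iff_dvd_diff)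
    moreover have "\<not> int P dvd 2" using that nP by (auto dest: zdvd_imp_le)
    ultimately have "int P dvd HH P (P - 1)"
      using assms nP by (metis prime_dvd_mult_iff)
    then show ?thesis unfolding e sum_int_ivl by (simp add: cong_0_iff HH_def nP)
  qed
  show ?thesis using part1 part2 by blast
qed

end
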